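(* For every positive integer $d\ne 2$, $\mathrm{rc}(\lozenge_d) = d+1$.
   Context: $\lozenge_d = \{0,\pm e_1,\dots,\pm e_d\}\subseteq\mathbb{Z}^d$. $\mathrm{rc}(X)$ is the smallest number of facets of a polyhedron $P\subseteq\mathbb{R}^d$ with $P\cap\mathbb{Z}^d = X$. *)

theory Defs
  imports "HOL-Analysis.Analysis"
begin

definition int_points :: "(real ^ 'n) set" where
  "int_points = {x. \<forall>i. x $ i \<in> \<int>}"

definition diamond :: "(real ^ 'n) set" where
  "diamond = {0} \<union> {axis i 1 | i. True} \<union> {axis i (-1) | i. True}"

definition rc :: "(real ^ 'n) set \<Rightarrow> nat" where
  "rc X = (LEAST m. \<exists>P. polyhedron P \<and> P \<inter> int_points = X \<and> card {F. F facet_of P} = m)"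

end

theory Submission
  imports Defs
begin

lemma facets_le_halfspaces:
  fixes P :: "'a::euclidean_space set"
  assumes fin: "finite F0" and hs: "\<And>h. h \<in> F0 \<Longrightarrow> \<exists>a b. a \<noteq> 0 \<and> h = {x. a \<bullet> x \<le> b}"
    and Peq: "P = \<Inter>F0" and aff: "affine hull P = UNIV"
  shows "card {C. C facet_of P} \<le> card F0"
proof -
  obtain F where F: "F \<subseteq> F0" "\<Inter>F = P"
      and Fmin: "\<And>F'. F' \<subseteq> F0 \<and> \<Inter>F' = P \<Longrightarrow> card F \<le> card F'"
    using ex_has_least_nat[of "\<lambda>F. F \<subseteq> F0 \<and> \<Inter>F = P" F0 card] Peq by blast
  have finF: "finite F" using F(1) fin finite_subset by blast
  have min: "\<Inter>F' \<noteq> P" if "F' \<subset> F" for F'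
  proof
    assume "\<Inter>F' = P"
    then have "card F \<le> card F'" using that F(1) Fmin by blast
    moreover have "card F' < card F" using that finF psubset_card_mono by blast
    ultimately show False by simp
  qed
  have "\<forall>h\<in>F. \<exists>a b. a \<noteq> 0 \<and> h = {x. a \<bullet> x \<le> b}" using hs F(1) by blast
  then obtain a b where ab: "\<And>h. h \<in> F \<Longrightarrow> a h \<noteq> 0 \<and> h = {x. a h \<bullet> x \<le> b h}"
    by metis
  have seq: "P = affine hull P \<inter> \<Inter>F" using aff F(2) by simp
  have psub: "P \<subset> affine hull P \<inter> \<Inter>F'" if "F' \<subset> F" for F'
    using min[OF that] F(2) that aff Inter_anti_mono[of F' F] by auto
  have "{C. C facet_of P} = (\<lambda>h. P \<inter> {x. a h \<bullet> x = b h}) ` F"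
    using facet_of_polyhedron_explicit[OF finF seq ab psub] by auto
  then have "card {C. C facet_of P} \<le> card F" by (simp add: card_image_le finF)
  also have "\<dots> \<le> card F0" using F(1) fin card_mono by blast
  finally show ?thesis .
qed

lemma polyhedron_facet_rep:
  fixes P :: "'a::euclidean_space set"
  assumes poly: "polyhedron P" and aff: "affine hull P = UNIV"
  obtains F :: "'a set set" and a b where "finite F" "\<And>x. x \<in> P \<longleftrightarrow> (\<forall>h\<in>F. a h \<bullet> x \<le> b h)"
     "\<And>h. h \<in> F \<Longrightarrow> a h \<noteq> 0"
     "card F \<le> card {C. C facet_of P}"
proof -
  obtain F where finF: "finite F" and seq: "P = affine hull P \<inter> \<Inter>F"
     and faces: "\<And>h. h \<in> F \<Longrightarrow> \<exists>a b. a \<noteq> 0 \<and> h = {x. a \<bullet> x \<le> b}"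
     and min: "\<And>F'. F' \<subset> F \<Longrightarrow> P \<subset> affine hull P \<inter> \<Inter>F'"
    using poly by (simp add: polyhedron_Int_affine_minimal) meson
  then obtain a b where ab: "\<And>h. h \<in> F \<Longrightarrow> a h \<noteq> 0 \<and> h = {x. a h \<bullet> x \<le> b h}" by metis
  define g where "g h = P \<inter> {x. a h \<bullet> x = b h}" for h
  have facet: "g h facet_of P" if "h \<in> F" for h
    using facet_of_polyhedron_explicit[OF finF seq ab min] that g_def by blast
  have Pne: "P \<noteq> {}" using aff by auto
  obtain x0 where x0: "x0 \<in> rel_interior P"
    using rel_interior_eq_empty polyhedron_imp_convex poly Pne by blast
  have rel: "rel_interior P = {x \<in> P. \<forall>h \<in> F. a h \<bullet> x < b h}"
    by (rule rel_interior_polyhedron_explicit [OF finF seq ab min])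
  have Pmem: "x \<in> P \<longleftrightarrow> (\<forall>h\<in>F. a h \<bullet> x \<le> b h)" for x
  proof -
    have "x \<in> P \<longleftrightarrow> (\<forall>h\<in>F. x \<in> h)" using seq aff by auto
    also have "\<dots> \<longleftrightarrow> (\<forall>h\<in>F. a h \<bullet> x \<le> b h)" using ab by auto
    finally show ?thesis .
  qed
  have x0h: "a h \<bullet> x0 < b h" if "h\<in>F" for h using x0 rel that by auto
  have inj: "inj_on g F"
  proof
    fix h1 h2 assume h1: "h1 \<in> F" and h2: "h2 \<in> F" and geq: "g h1 = g h2"
    show "h1 = h2"
    proof (rule ccontr)
      assume ne: "h1 \<noteq> h2"
      have "F - {h1} \<subset> F" using h1 by auto
      from min[OF this] obtain y where y: "y \<in> \<Inter>(F - {h1})" "y \<notin> P" using aff by auto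
      have yh: "a h \<bullet> y \<le> b h" if "h \<in> F" "h \<noteq> h1" for h using y(1) that ab by auto
      have y1: "a h1 \<bullet> y > b h1"
      proof (rule ccontr)
        assume "\<not> ?thesis"
        then have "\<forall>h\<in>F. a h \<bullet> y \<le> b h" using yh by (metis not_less)
        then show False using y(2) Pmem by blast
      qed
      define \<alpha> where "\<alpha> = a h1 \<bullet> x0"
      define \<beta> where "\<beta> = a h1 \<bullet> y"
      have al: "\<alpha> < b h1" using x0h[OF h1] \<alpha>_def by simp
      have be: "b h1 < \<beta>" using y1 \<beta>_def by simp
      define t where "t = (b h1 - \<alpha>) / (\<beta> - \<alpha>)"
      have t0: "0 < t" using al be by (simp add: t_def)
      have t1: "t < 1" using al be by (simp add: t_def)
      have tb: "\<alpha> + t * (\<beta> - \<alpha>) = b h1" using al be by (simp add: t_def)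
      define w where "w = x0 + t *\<^sub>R (y - x0)"
      have lin: "a h \<bullet> w = (1 - t) * (a h \<bullet> x0) + t * (a h \<bullet> y)" for h
        by (simp add: w_def inner_diff_right inner_add_right algebra_simps)
      have w1: "a h1 \<bullet> w = b h1" using lin[of h1] tb \<alpha>_def \<beta>_def by (simp add: algebra_simps)
      have wlt: "a h \<bullet> w < b h" if "h \<in> F" "h \<noteq> h1" for h
      proof -
        have "(1 - t) * (a h \<bullet> x0) < (1 - t) * b h"
          using x0h[OF that(1)] t1 by (intro mult_strict_left_mono) auto
        moreover have "t * (a h \<bullet> y) \<le> t * b h"
          using yh[OF that] t0 by (intro mult_left_mono) auto
        ultimately show ?thesis using lin[of h] by (simp add: algebra_simps)
      qed
      have "w \<in> P" unfolding Pmem using w1 wlt by (metis order_le_less)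
      then have "w \<in> g h1" using w1 g_def by auto
      then have "a h2 \<bullet> w = b h2" using geq g_def by auto
      with wlt[OF h2] ne show False by auto
    qed
  qed
  have "card F = card (g ` F)" using inj card_image by metis
  also have "\<dots> \<le> card {C. C facet_of P}"
    using facet finite_polyhedron_facets[OF poly] by (intro card_mono) auto
  finally have cardle: "card F \<le> card {C. C facet_of P}" .
  show ?thesis by (rule that[of F a b]) (use finF ab Pmem cardle in auto)
qed

lemma diamond_cases:
  "x \<in> diamond \<longleftrightarrow> x = 0 \<or> (\<exists>i. x = axis i 1) \<or> (\<exists>i. x = axis i (-1))"
  by (auto simp: diamond_def)

lemma diamond_coord_le1:
  assumes "x \<in> (diamond :: (real^'n) set)" shows "x $ j \<le> 1"
  using assms by (auto simp: diamond_cases axis_def)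

lemma affine_hull_diamond: "affine hull (diamond :: (real^'n) set) = UNIV"
proof -
  have "0 \<in> affine hull (diamond :: (real^'n) set)" by (simp add: diamond_def hull_inc)
  then have "affine hull (diamond :: (real^'n) set) = span diamond" by (rule affine_hull_span_0)
  moreover have "cart_basis \<subseteq> (diamond :: (real^'n) set)"
    by (auto simp: cart_basis_def diamond_def)
  then have "span (cart_basis :: (real^'n) set) \<subseteq> span diamond" by (rule span_mono)
  then have "span (diamond :: (real^'n) set) = UNIV"
    using span_cart_basis span_vec_eq by (metis top.extremum_uniqueI)
  ultimately show ?thesis by simp
qed

lemma dim_le: "dim S \<le> CARD('n)" for S :: "(real^'n) set"
  by (metis DIM_cart DIM_real dim_subset_UNIV mult.right_neutral)

lemma inner_bound:
  fixes a x :: "real^'n"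
  assumes "\<And>i. \<bar>a$i\<bar> \<le> B" "\<And>i. \<bar>x$i\<bar> \<le> c"
  shows "\<bar>a \<bullet> x\<bar> \<le> real CARD('n) * B * c"
proof -
  have "\<bar>a \<bullet> x\<bar> = \<bar>\<Sum>i\<in>UNIV. a$i * x$i\<bar>" by (simp add: inner_vec_def)
  also have "\<dots> \<le> (\<Sum>i\<in>UNIV. \<bar>a$i * x$i\<bar>)" by (rule sum_abs)
  also have "\<dots> \<le> (\<Sum>i\<in>(UNIV::'n set). B * c)"
    by (intro sum_mono) (simp add: abs_mult assms mult_mono')
  also have "\<dots> = real CARD('n) * B * c" by simp
  finally show ?thesis .
qed

lemma lower_bound:
  fixes P :: "(real^'n) set"
  assumes poly: "polyhedron P" and PZ: "P \<inter> int_points = diamond"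
  shows "CARD('n) + 1 \<le> card {C. C facet_of P}"
proof -
  let ?d = "CARD('n)"
  have dP: "diamond \<subseteq> P" using PZ by auto
  have aff: "affine hull P = UNIV"
    using hull_mono[OF dP, of affine] affine_hull_diamond by auto
  obtain F :: "(real^'n) set set" and a b where finF: "finite F"
    and mem: "\<And>x. x \<in> P \<longleftrightarrow> (\<forall>h\<in>F. a h \<bullet> x \<le> b h)"
    and anz: "\<And>h. h \<in> F \<Longrightarrow> a h \<noteq> 0"
    and cardF: "card F \<le> card {C. C facet_of P}"
    using polyhedron_facet_rep[OF poly aff] by blast
  have b0: "0 \<le> b h" if "h \<in> F" for h
  proof -
    have "(0::real^'n) \<in> P" using dP by (auto simp: diamond_def)
    then show ?thesis using mem that by fastforce
  qed
  have abnd: "\<bar>a h $ i\<bar> \<le> b h" if "h \<in> F" for h i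
  proof -
    have "axis i 1 \<in> P" "axis i (-1) \<in> P" using dP by (auto simp: diamond_def)
    then have "a h \<bullet> axis i 1 \<le> b h" "a h \<bullet> axis i (-1) \<le> b h" using mem that by blast+
    then show ?thesis by (simp add: inner_axis)
  qed
  have ge: "a h \<bullet> z \<ge> - b h" if "h \<in> F" "z \<in> diamond" for h z
  proof -
    have "a h \<bullet> axis i 1 \<ge> - b h" "a h \<bullet> axis i (-1) \<ge> - b h" for i
      using abnd[OF that(1), of i] by (auto simp: inner_axis)
    then show ?thesis using that b0 by (auto simp: diamond_cases)
  qed
  have key: False if small: "card F \<le> ?d"
  proof -
    obtain z where zI: "z \<in> int_points" and zD: "z \<notin> diamond" and zP: "\<And>h. h \<in> F \<Longrightarrow> a h \<bullet> z \<le> b h"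
    proof -
      define A where "A = a ` F"
      have finA: "finite A" using finF A_def by simp
      have cardA: "card A \<le> ?d" using card_image_le[OF finF, of a] small A_def by simp
      show ?thesis
      proof (cases "dim A < ?d")
        case True
        then obtain v :: "real^'n" where v0: "v \<noteq> 0" and vorth: "\<And>y. y \<in> span A \<Longrightarrow> orthogonal v y"
          using orthogonal_to_subspace_exists[of A] by auto
        have av: "a h \<bullet> v = 0" if "h \<in> F" for h
          using vorth[of "a h"] that span_base[of "a h" A] A_def
          by (auto simp: orthogonal_def inner_commute)
        obtain i0 where vi0: "v $ i0 \<noteq> 0" using v0 by (metis vec_eq_iff zero_index)
        obtain \<sigma> :: "nat \<Rightarrow> 'n" where bij: "bij_betw \<sigma> {..<?d} UNIV"
          using ex_bij_betw_nat_finite[of "UNIV::'n set"] by (auto simp: atLeast0LessThan)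
        define idx where "idx = inv_into {..<?d} \<sigma>"
        have surj: "\<sigma> ` {..<?d} = UNIV" using bij bij_betw_imp_surj_on by blast
        have idx1: "idx i < ?d" for i using inv_into_into[of i \<sigma> "{..<?d}"] surj idx_def by auto
        have idx2: "\<sigma> (idx i) = i" for i using f_inv_into_f[of i \<sigma> "{..<?d}"] surj idx_def by auto
        define N :: nat where "N = 2 * ?d"
        have Npos: "N > 0" using N_def by simp
        obtain q p where q0: "0 < q" and qp: "\<And>k. k < ?d \<Longrightarrow>
            \<bar>of_int q * (v $ \<sigma> k / v $ i0) - of_int (p k)\<bar> < 1 / N"
          using Dirichlet_approx_simult[OF Npos, where \<theta>="\<lambda>k. v $ \<sigma> k / v $ i0" and n="?d"] by blast
        define u where "u = (of_int q / v $ i0) *\<^sub>R v"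
        define z0 :: "real^'n" where "z0 = (\<chi> i. of_int (p (idx i)))"
        have uz: "\<bar>(z0 - u) $ i\<bar> \<le> 1 / N" for i
        proof -
          have "\<bar>of_int q * (v $ \<sigma> (idx i) / v $ i0) - of_int (p (idx i))\<bar> < 1 / N"
            using qp[OF idx1] by blast
          then show ?thesis using idx2[of i] by (simp add: z0_def u_def abs_minus_commute)
        qed
        have pq: "p (idx i0) = q"
        proof -
          have "\<bar>of_int q * (v $ \<sigma> (idx i0) / v $ i0) - of_int (p (idx i0))\<bar> < 1 / N"
            using qp[OF idx1] by blast
          then have "\<bar>of_int q - of_int (p (idx i0))\<bar> < (1::real) / N" using idx2[of i0] vi0 by simp
          moreover have "(1::real) / N \<le> 1" using Npos by simp
          ultimately have "\<bar>q - p (idx i0)\<bar> < 1" by linarith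
          then show ?thesis by linarith
        qed
        show ?thesis
        proof (rule that[of "2 *\<^sub>R z0"])
          show "2 *\<^sub>R z0 \<in> int_points" by (simp add: int_points_def z0_def)
          show "2 *\<^sub>R z0 \<notin> diamond"
          proof
            assume "2 *\<^sub>R z0 \<in> diamond"
            then have "(2 *\<^sub>R z0) $ i0 \<le> 1" by (rule diamond_coord_le1)
            moreover have "(2 *\<^sub>R z0) $ i0 = 2 * of_int q" using pq by (simp add: z0_def)
            ultimately show False using q0 by simp
          qed
          fix h assume hF: "h \<in> F"
          have "a h \<bullet> u = 0" using av[OF hF] by (simp add: u_def)
          then have "a h \<bullet> z0 = a h \<bullet> (z0 - u)" by (simp add: inner_diff_right)
          also have "\<dots> \<le> real ?d * b h * (1 / N)"
            using inner_bound[of "a h" "b h" "z0 - u" "1/N"] abnd[OF hF] uz by (meson abs_le_D1)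
          also have "\<dots> = b h / 2" using N_def by simp
          finally show "a h \<bullet> (2 *\<^sub>R z0) \<le> b h" by simp
        qed
      next
        case False
        have dimA: "dim A = ?d" using False dim_le[of A] by simp
        then have spanA: "span A = UNIV" using dim_eq_full[of A] by simp
        have Ane: "A \<noteq> {}" using dimA by auto
        have "\<forall>a'\<in>A. \<exists>u. u \<noteq> 0 \<and> (\<forall>y\<in>span (A - {a'}). orthogonal u y)"
        proof
          fix a' assume a': "a' \<in> A"
          have "dim (A - {a'}) \<le> card (A - {a'})" by (rule dim_le_card) (auto simp: span_superset finA)
          also have "\<dots> < ?d"
          proof -
            have "0 < card A" using a' finA card_gt_0_iff[of A] by blast
            then show ?thesis using cardA a' finA by (simp add: card_Diff_singleton)
          qed
          finally have "dim (A - {a'}) < DIM(real^'n)" by simp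
          then obtain u where "u \<noteq> 0" "\<And>y. y \<in> span (A - {a'}) \<Longrightarrow> orthogonal u y"
            using orthogonal_to_subspace_exists by blast
          then show "\<exists>u. u \<noteq> 0 \<and> (\<forall>y\<in>span (A - {a'}). orthogonal u y)" by blast
        qed
        then obtain u where u0: "\<And>a'. a' \<in> A \<Longrightarrow> u a' \<noteq> 0"
          and uorth: "\<And>a' y. a' \<in> A \<Longrightarrow> y \<in> span (A - {a'}) \<Longrightarrow> orthogonal (u a') y"
          by metis
        have una: "a' \<bullet> u a' \<noteq> 0" if a': "a' \<in> A" for a'
        proof
          assume eq: "a' \<bullet> u a' = 0"
          have "orthogonal (u a') y" if "y \<in> A" for y
          proof (cases "y = a'")
            case True then show ?thesis using eq by (simp add: orthogonal_def inner_commute)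
          next
            case False then show ?thesis using uorth[OF a', of y] span_base[of y "A - {a'}"] that by auto
          qed
          then have "orthogonal (u a') (u a')" using orthogonal_to_span[of "u a'" A] spanA by blast
          then show False using u0[OF a'] by (simp add: orthogonal_def)
        qed
        define K where "K = 1 + (\<Sum>h\<in>F. 2 * real ?d * b h)"
        have Kge: "K \<ge> 1 + 2 * real ?d * b h" if "h \<in> F" for h
        proof -
          have "2 * real ?d * b h \<le> (\<Sum>h\<in>F. 2 * real ?d * b h)"
            using that finF b0 by (intro member_le_sum) auto
          then show ?thesis by (simp add: K_def)
        qed
        define w where "w = (\<Sum>a'\<in>A. (- K / (a' \<bullet> u a')) *\<^sub>R u a')"
        have aw: "a h \<bullet> w = - K" if "h \<in> F" for h
        proof -
          have ahA: "a h \<in> A" using that A_def by auto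
          have z: "(- K / (a' \<bullet> u a')) * (a h \<bullet> u a') = 0" if "a' \<in> A - {a h}" for a'
          proof -
            have "orthogonal (u a') (a h)" using that ahA by (intro uorth) (auto intro: span_base)
            then show ?thesis by (simp add: orthogonal_def inner_commute)
          qed
          have "a h \<bullet> w = (\<Sum>a'\<in>A. (- K / (a' \<bullet> u a')) * (a h \<bullet> u a'))"
            by (simp add: w_def inner_sum_right)
          also have "\<dots> = (- K / (a h \<bullet> u (a h))) * (a h \<bullet> u (a h)) +
              (\<Sum>a'\<in>A - {a h}. (- K / (a' \<bullet> u a')) * (a h \<bullet> u a'))"
            using finA ahA by (simp add: sum.remove)
          also have "\<dots> = - K"
          proof -
            have "(\<Sum>a'\<in>A - {a h}. (- K / (a' \<bullet> u a')) * (a h \<bullet> u a')) = 0"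
              using z by (intro sum.neutral) blast
            then show ?thesis using una[OF ahA] by simp
          qed
          finally show ?thesis .
        qed
        define z :: "real^'n" where "z = (\<chi> i. of_int \<lfloor>w $ i\<rfloor>)"
        have zw: "\<bar>(z - w) $ i\<bar> \<le> 1" for i
          by (simp add: z_def) linarith
        have az: "a h \<bullet> z \<le> - 1 - real ?d * b h" if "h \<in> F" for h
        proof -
          have "a h \<bullet> (z - w) \<le> real ?d * b h * 1"
            using inner_bound[of "a h" "b h" "z - w" 1] abnd[OF that] zw by (meson abs_le_D1)
          then have "a h \<bullet> z \<le> - K + real ?d * b h" using aw[OF that] by (simp add: inner_diff_right)
          then show ?thesis using Kge[OF that] by simp
        qed
        show ?thesis
        proof (rule that[of z])
          show "z \<in> int_points" by (simp add: int_points_def z_def)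
          obtain h where hF: "h \<in> F" using Ane A_def by auto
          show "z \<notin> diamond"
          proof
            assume "z \<in> diamond"
            then have "a h \<bullet> z \<ge> - b h" using ge hF by blast
            moreover have "real ?d * b h \<ge> b h"
              using b0[OF hF] mult_right_mono[of 1 "real ?d" "b h"] by simp
            ultimately show False using az[OF hF] b0[OF hF] by linarith
          qed
          fix h assume hF: "h \<in> F"
          have "real ?d * b h \<ge> 0" using b0[OF hF] by simp
          then show "a h \<bullet> z \<le> b h" using az[OF hF] b0[OF hF] by linarith
        qed
      qed
    qed
    then show False using PZ mem by blast
  qed
  have "\<not> card F \<le> ?d" using key by blast
  then show ?thesis using cardF by linarith
qed

definition dl :: "nat \<Rightarrow> nat \<Rightarrow> nat \<Rightarrow> nat" where
  "dl d j k = (if j \<le> k then k - j else k + d - j)"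
definition nxt :: "nat \<Rightarrow> nat \<Rightarrow> nat" where
  "nxt d j = (if Suc j = d then 0 else Suc j)"
definition prv :: "nat \<Rightarrow> nat \<Rightarrow> nat" where
  "prv d j = (if j = 0 then d - 1 else j - 1)"
definition WI :: "nat \<Rightarrow> (nat \<Rightarrow> int) \<Rightarrow> nat \<Rightarrow> int" where
  "WI d Y j = (\<Sum>k<d. int (dl d j k) * Y k)"
definition unitchar :: "nat \<Rightarrow> (nat \<Rightarrow> int) \<Rightarrow> bool" where
  "unitchar d Y \<longleftrightarrow> (\<forall>k<d. Y k = 0) \<or>
     (\<exists>i<d. \<exists>t. (t = 1 \<or> t = -1) \<and> (\<forall>k<d. Y k = (if k = i then t else 0)))"

lemma nxt_lt: "j < d \<Longrightarrow> nxt d j < d" by (auto simp: nxt_def)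
lemma prv_lt: "j < d \<Longrightarrow> prv d j < d" by (auto simp: prv_def)
lemma nxt_prv: "j < d \<Longrightarrow> nxt d (prv d j) = j" by (auto simp: nxt_def prv_def)

lemma dl_step:
  assumes "j < d" "k < d"
  shows "int (dl d (nxt d j) k) = int (dl d j k) + (if k = j then int d - 1 else -1)"
  using assms by (auto simp: dl_def nxt_def)

lemma WI_step:
  assumes "j < d"
  shows "WI d Y (nxt d j) = WI d Y j + int d * Y j - (\<Sum>k<d. Y k)"
proof -
  have "WI d Y (nxt d j) = (\<Sum>k<d. (int (dl d j k) + (if k = j then int d - 1 else -1)) * Y k)"
    unfolding WI_def using assms by (intro sum.cong) (auto simp: dl_step)
  also have "\<dots> = (\<Sum>k<d. int (dl d j k) * Y k + (if k = j then int d * Y k else 0) - Y k)"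
    by (intro sum.cong) (auto simp: algebra_simps)
  also have "\<dots> = WI d Y j + (\<Sum>k<d. (if k = j then int d * Y k else 0)) - (\<Sum>k<d. Y k)"
    by (simp add: WI_def sum.distrib sum_subtractf)
  also have "\<dots> = WI d Y j + int d * Y j - (\<Sum>k<d. Y k)" using assms by simp
  finally show ?thesis .
qed

lemma dl_lt: "j < d \<Longrightarrow> k < d \<Longrightarrow> dl d j k < d" by (auto simp: dl_def)
lemma dl_invol: "j < d \<Longrightarrow> k < d \<Longrightarrow> dl d (dl d j k) k = j" by (auto simp: dl_def)

lemma gauss2: "2 * (\<Sum>m<d. int m) = int d * (int d - 1)"
  by (induction d) (auto simp: algebra_simps)

lemma sum_dl: assumes "k < d" shows "(\<Sum>j<d. int (dl d j k)) = (\<Sum>m<d. int m)"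
proof -
  have "bij_betw (\<lambda>j. dl d j k) {..<d} {..<d}"
    by (rule bij_betw_byWitness[where f'="\<lambda>j. dl d j k"]) (use assms dl_lt dl_invol in auto)
  then show ?thesis by (rule sum.reindex_bij_betw)
qed

lemma WI_sum: "2 * (\<Sum>j<d. WI d Y j) = int d * (int d - 1) * (\<Sum>k<d. Y k)"
proof -
  have "(\<Sum>j<d. WI d Y j) = (\<Sum>j<d. \<Sum>k<d. int (dl d j k) * Y k)"
    unfolding WI_def ..
  also have "\<dots> = (\<Sum>k<d. \<Sum>j<d. int (dl d j k) * Y k)" by (rule sum.swap)
  also have "\<dots> = (\<Sum>k<d. (\<Sum>j<d. int (dl d j k)) * Y k)" by (simp add: sum_distrib_right)
  also have "\<dots> = (\<Sum>k<d. (\<Sum>m<d. int m) * Y k)" by (intro sum.cong) (auto simp: sum_dl)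
  also have "\<dots> = (\<Sum>m<d. int m) * (\<Sum>k<d. Y k)" by (simp add: sum_distrib_left)
  finally have "2 * (\<Sum>j<d. WI d Y j) = (2 * (\<Sum>m<d. int m)) * (\<Sum>k<d. Y k)"
    by simp
  then show ?thesis unfolding gauss2 .
qed

lemma WI_interval:
  assumes "i \<le> j" "j < d"
  shows "WI d Y j = WI d Y i + int d * (\<Sum>k\<in>{i..<j}. Y k) - int (j - i) * (\<Sum>k<d. Y k)"
  using assms
proof (induction j rule: dec_induct)
  case base then show ?case by simp
next
  case (step j)
  have nx: "nxt d j = Suc j" using step by (auto simp: nxt_def)
  have "WI d Y (Suc j) = WI d Y j + int d * Y j - (\<Sum>k<d. Y k)"
    using WI_step[of j d Y] step nx by simp
  also have "\<dots> = WI d Y i + int d * (\<Sum>k\<in>{i..<Suc j}. Y k) - int (Suc j - i) * (\<Sum>k<d. Y k)"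
  proof -
    have s1: "(\<Sum>k\<in>{i..<Suc j}. Y k) = (\<Sum>k\<in>{i..<j}. Y k) + Y j"
      using step(1) by (simp add: sum.atLeastLessThan_Suc)
    have s2: "int (Suc j - i) = int (j - i) + 1" using step(1) by simp
    have s3: "WI d Y j = WI d Y i + int d * (\<Sum>k\<in>{i..<j}. Y k) - int (j - i) * (\<Sum>k<d. Y k)"
      using step by simp
    show ?thesis unfolding s1 s2 s3 by (simp add: algebra_simps)
  qed
  finally show ?case .
qed

lemma sum_distinct_le:
  fixes T :: "int set"
  assumes "finite T" "\<forall>x\<in>T. x \<le> M"
  shows "2 * \<Sum>T \<le> 2 * int (card T) * M - int (card T) * (int (card T) - 1)"
  using assms
proof (induction "card T" arbitrary: T M)
  case 0 then show ?case by simp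
next
  case (Suc n)
  then have ne: "T \<noteq> {}" by auto
  define m where "m = Max T"
  have mT: "m \<in> T" using Suc.prems ne m_def by simp
  have mM: "m \<le> M" using mT Suc.prems by blast
  let ?T' = "T - {m}"
  have cT': "card ?T' = n" using Suc.hyps mT Suc.prems by simp
  have le': "\<forall>x\<in>?T'. x \<le> m - 1"
  proof
    fix x assume "x \<in> ?T'"
    then have "x \<le> m" "x \<noteq> m" using Suc.prems m_def by auto
    then show "x \<le> m - 1" by simp
  qed
  have IH: "2 * \<Sum>?T' \<le> 2 * int n * (m - 1) - int n * (int n - 1)"
    using Suc.hyps(1)[of ?T' "m - 1"] cT' le' Suc.prems by simp
  have sT: "\<Sum>T = m + \<Sum>?T'" using Suc.prems mT by (simp add: sum.remove)
  have eq: "2*m + (2 * int n * (m - 1) - int n * (int n - 1)) = 2 * int (Suc n) * m - int (Suc n) * (int (Suc n) - 1)"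
    by (simp add: algebra_simps)
  have mm: "int (Suc n) * m \<le> int (Suc n) * M" by (rule mult_left_mono) (use mM in auto)
  have fin: "2 * \<Sum>T \<le> 2 * int (Suc n) * M - int (Suc n) * (int (Suc n) - 1)"
    using IH sT eq mm by linarith
  show ?case unfolding Suc.hyps(2)[symmetric] by (rule fin)
qed

lemma nonpos_sum_zero:
  fixes Y :: "nat \<Rightarrow> int"
  assumes "finite A" "\<And>k. k \<in> A \<Longrightarrow> Y k \<le> 0" "(\<Sum>k\<in>A. Y k) = 0"
  shows "\<And>k. k \<in> A \<Longrightarrow> Y k = 0"
proof -
  have "(\<Sum>k\<in>A. - Y k) = 0" using assms(3) by (simp add: sum_negf)
  then have "\<forall>k\<in>A. - Y k = 0" using sum_nonneg_eq_0_iff[of A "\<lambda>k. - Y k"] assms(1,2) by auto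
  then show "\<And>k. k \<in> A \<Longrightarrow> Y k = 0" by auto
qed

lemma comb1:
  fixes Y :: "nat \<Rightarrow> int"
  assumes d: "d \<ge> 2" and S: "(\<Sum>k<d. Y k) = 1"
    and le1: "\<And>j. j<d \<Longrightarrow> Y j \<le> 1"
    and tie: "\<And>j. j<d \<Longrightarrow> Y j = 1 \<Longrightarrow> WI d Y j \<le> Y (nxt d j)"
  shows "\<exists>i<d. \<forall>k<d. Y k = (if k = i then 1 else 0)"
proof -
  have step: "WI d Y (nxt d j) = WI d Y j + int d * Y j - 1" if "j<d" for j
    using WI_step[OF that, of Y] S by simp
  obtain p where p: "p < d" "\<And>j. j<d \<Longrightarrow> WI d Y j \<le> WI d Y p"
  proof -
    define M where "M = Max (WI d Y ` {..<d})"
    have "0 \<in> {..<d}" using d by simp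
    then have "{..<d} \<noteq> {}" by blast
    then have "M \<in> WI d Y ` {..<d}" unfolding M_def by (intro Max_in) auto
    then obtain p where "p < d" "WI d Y p = M" by auto
    moreover have "WI d Y j \<le> M" if "j < d" for j unfolding M_def using that by (intro Max_ge) auto
    ultimately show ?thesis using that by auto
  qed
  have pmax: "WI d Y p \<le> int d - 1"
  proof (rule ccontr)
    assume big: "\<not> ?thesis"
    define q where "q = prv d p"
    have q: "q < d" "nxt d q = p" using p prv_lt nxt_prv q_def by auto
    have wp: "WI d Y p = WI d Y q + int d * Y q - 1" using step[OF q(1)] q(2) by simp
    have Yq: "Y q = 1"
    proof (rule ccontr)
      assume "Y q \<noteq> 1" then have "Y q \<le> 0" using le1[OF q(1)] by simp
      then have "int d * Y q \<le> 0" by (simp add: mult_nonneg_nonpos)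
      then have "WI d Y p < WI d Y q" using wp by simp
      then show False using p(2)[OF q(1)] by simp
    qed
    have "WI d Y q \<le> Y p" using tie[OF q(1) Yq] q(2) by simp
    then have wp2: "WI d Y p \<le> Y p + int d - 1" using wp Yq by simp
    show False
    proof (cases "Y p = 1")
      case True
      have "WI d Y p \<le> Y (nxt d p)" using tie[OF p(1) True] .
      moreover have "Y (nxt d p) \<le> 1" using le1 nxt_lt p(1) by blast
      ultimately show False using big d by linarith
    next
      case False then have "Y p \<le> 0" using le1[OF p(1)] by simp
      then show False using wp2 big by linarith
    qed
  qed
  have maxle: "WI d Y j \<le> int d - 1" if "j < d" for j using p(2)[OF that] pmax by simp
  have dist: "WI d Y i \<noteq> WI d Y j" if "i < j" "j < d" for i j
  proof
    assume eq: "WI d Y i = WI d Y j"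
    define X where "X = (\<Sum>k\<in>{i..<j}. Y k)"
    have "WI d Y j = WI d Y i + int d * X - int (j - i)"
      using WI_interval[of i j d Y] that S X_def by simp
    then have dx: "int d * X = int (j - i)" using eq by simp
    have ji: "0 < int (j - i)" "int (j - i) < int d" using that by auto
    show False
    proof (cases "X \<ge> 1")
      case True
      then have "int d * X \<ge> int d * 1" by (intro mult_left_mono) auto
      then show False using dx ji by simp
    next
      case False
      then have "X \<le> 0" by simp
      then have "int d * X \<le> 0" by (simp add: mult_nonneg_nonpos)
      then show False using dx ji by simp
    qed
  qed
  have inj: "inj_on (WI d Y) {..<d}"
  proof (rule inj_onI)
    fix i j assume "i \<in> {..<d}" "j \<in> {..<d}" "WI d Y i = WI d Y j"
    then show "i = j" using dist by (metis lessThan_iff linorder_neqE_nat)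
  qed
  have nonneg: "WI d Y j \<ge> 0" if j: "j < d" for j
  proof (rule ccontr)
    assume neg: "\<not> ?thesis"
    define T where "T = WI d Y ` ({..<d} - {j})"
    have injT: "inj_on (WI d Y) ({..<d} - {j})" using inj by (rule inj_on_subset) auto
    have cT: "card T = d - 1" using injT j by (simp add: T_def card_image)
    have finT: "finite T" by (simp add: T_def)
    have leT: "\<forall>x\<in>T. x \<le> int d - 1" using maxle by (auto simp: T_def)
    have bnd: "2 * \<Sum>T \<le> 2 * int (d - 1) * (int d - 1) - int (d - 1) * (int (d - 1) - 1)"
      using sum_distinct_le[OF finT leT] cT by simp
    have sT: "\<Sum>T = (\<Sum>i\<in>{..<d} - {j}. WI d Y i)" unfolding T_def using injT by (simp add: sum.reindex)
    have tot: "(\<Sum>i<d. WI d Y i) = WI d Y j + (\<Sum>i\<in>{..<d} - {j}. WI d Y i)"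
      using j by (simp add: sum.remove)
    have ws: "2 * (\<Sum>i<d. WI d Y i) = int d * (int d - 1)" using WI_sum[of d Y] S by simp
    have idt: "int d * (int d - 1) - (2 * int (d - 1) * (int d - 1) - int (d - 1) * (int (d - 1) - 1)) = 0"
      using d by (simp add: of_nat_diff algebra_simps)
    show False using bnd sT tot ws idt neg by linarith
  qed
  have A0: "WI d Y j = 0" if "j < d" "Y j = 1" for j
  proof -
    have a: "WI d Y j \<le> Y (nxt d j)" using tie that by blast
    have b: "Y (nxt d j) \<le> 1" using le1 nxt_lt that(1) by blast
    have c: "WI d Y j \<ge> 0" using nonneg that(1) by blast
    show ?thesis
    proof (rule ccontr)
      assume "WI d Y j \<noteq> 0"
      then have w1: "WI d Y j = 1" and yn: "Y (nxt d j) = 1" using a b c by linarith+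
      have "WI d Y (nxt d j) = int d" using step[OF that(1)] w1 that(2) by simp
      then show False using maxle[OF nxt_lt[OF that(1)]] by simp
    qed
  qed
  have uniq: "i = i'" if "i < d" "i' < d" "Y i = 1" "Y i' = 1" for i i'
    using A0 that dist by (metis linorder_neqE_nat)
  obtain i where i: "i < d" "Y i = 1"
  proof -
    have "\<exists>i<d. Y i = 1"
    proof (rule ccontr)
      assume "\<not> ?thesis"
      then have "\<And>k. k < d \<Longrightarrow> Y k \<le> 0" using le1 by (metis order_less_le zle_add1_eq_le add_0)
      then have "(\<Sum>k<d. Y k) \<le> 0" by (intro sum_nonpos) auto
      then show False using S by simp
    qed
    then show ?thesis using that by blast
  qed
  have oth: "Y k \<le> 0" if "k \<in> {..<d} - {i}" for k
  proof -
    have "Y k \<noteq> 1" using uniq i that by auto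
    then show ?thesis using le1 that by (metis DiffE lessThan_iff order_less_le zle_add1_eq_le add_0)
  qed
  have "(\<Sum>k\<in>{..<d} - {i}. Y k) = 0" using S i by (simp add: sum.remove)
  then have "Y k = 0" if "k \<in> {..<d} - {i}" for k using nonpos_sum_zero[of "{..<d} - {i}" Y] oth that by blast
  then show ?thesis using i by (intro exI[of _ i]) auto
qed

lemma comb:
  fixes Y :: "nat \<Rightarrow> int"
  assumes d: "d \<ge> 3" and S1: "(\<Sum>k<d. Y k) \<le> 1" and S2: "(\<Sum>k<d. Y k) \<ge> -2"
    and up: "\<And>j. j < d \<Longrightarrow> 2 * Y j \<le> (\<Sum>k<d. Y k) + 1"
    and tie: "\<And>j. j < d \<Longrightarrow> 2 * Y j = (\<Sum>k<d. Y k) + 1 \<Longrightarrow> WI d Y j \<le> Y (nxt d j)"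
  shows "unitchar d Y"
proof -
  define S where "S = (\<Sum>k<d. Y k)"
  have "S = 1 \<or> S = 0 \<or> S = -1 \<or> S = -2" using S1 S2 S_def by linarith
  then consider (c1) "S = 1" | (c0) "S = 0" | (cm1) "S = -1" | (cm2) "S = -2" by blast
  then show ?thesis
  proof cases
    case c1
    have le1: "Y j \<le> 1" if "j<d" for j using up[OF that] c1 S_def by simp
    have t: "WI d Y j \<le> Y (nxt d j)" if "j<d" "Y j = 1" for j using tie[OF that(1)] that c1 S_def by simp
    obtain i where "i<d" "\<forall>k<d. Y k = (if k = i then 1 else 0)"
      using comb1[of d Y] d c1 S_def le1 t by auto
    then show ?thesis unfolding unitchar_def by blast
  next
    case c0
    have "Y j \<le> 0" if "j < d" for j using up[OF that] c0 S_def by simp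
    then have "Y k = 0" if "k<d" for k using nonpos_sum_zero[of "{..<d}" Y] c0 S_def that by auto
    then show ?thesis unfolding unitchar_def by blast
  next
    case cm1
    have np: "Y j \<le> 0" if "j < d" for j using up[OF that] cm1 S_def by simp
    obtain i where i: "i<d" "Y i \<noteq> 0"
    proof -
      have "\<exists>i<d. Y i \<noteq> 0"
      proof (rule ccontr)
        assume "\<not> ?thesis" then have "S = 0" by (simp add: S_def)
        then show False using cm1 by simp
      qed
      then show ?thesis using that by blast
    qed
    have sr: "S = Y i + (\<Sum>k\<in>{..<d}-{i}. Y k)" using i S_def by (simp add: sum.remove)
    have "(\<Sum>k\<in>{..<d}-{i}. Y k) \<le> 0" using np by (intro sum_nonpos) auto
    moreover have "Y i \<le> -1" using np[OF i(1)] i(2) by simp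
    ultimately have yi: "Y i = -1" and r0: "(\<Sum>k\<in>{..<d}-{i}. Y k) = 0" using sr cm1 by linarith+
    have "Y k = 0" if "k \<in> {..<d}-{i}" for k
      using nonpos_sum_zero[of "{..<d}-{i}" Y] r0 np that by auto
    then have "\<forall>k<d. Y k = (if k = i then -1 else 0)" using yi by auto
    then show ?thesis unfolding unitchar_def using i(1) by blast
  next
    case cm2
    have "Y j \<le> -1" if "j<d" for j using up[OF that] cm2 S_def by simp
    then have "S \<le> (\<Sum>k<d. -1)" unfolding S_def by (intro sum_mono) auto
    then have "S \<le> - int d" by simp
    then show ?thesis using cm2 d by simp
  qed
qed

definition epsd :: "nat \<Rightarrow> real" where "epsd d = 1 / (16 * real d * real d)"
definition gco :: "nat \<Rightarrow> nat \<Rightarrow> nat \<Rightarrow> real" where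
  "gco d j k = real (dl d j k) - (if k = nxt d j then 1 else 0)"
definition cbig :: "nat \<Rightarrow> nat \<Rightarrow> nat \<Rightarrow> real" where
  "cbig d j k = (if j < d then (if k = j then 2 else 0) - 1 + epsd d * gco d j k else 1)"

lemma dl_nxt: "j < d \<Longrightarrow> d \<ge> 2 \<Longrightarrow> dl d j (nxt d j) = 1" by (auto simp: dl_def nxt_def)
lemma dl_self: "dl d j j = 0" by (simp add: dl_def)

lemma gco_bound: assumes "j < d" "k < d" shows "\<bar>gco d j k\<bar> \<le> real d"
proof -
  have "dl d j k < d" using dl_lt assms by blast
  then show ?thesis by (auto simp: gco_def)
qed

lemma cbig_bound:
  assumes d: "d \<ge> 2" and j: "j < d + 1" and k: "k < d"
  shows "\<bar>cbig d j k\<bar> \<le> 1"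
proof (cases "j < d")
  case False then show ?thesis by (simp add: cbig_def)
next
  case True
  have e0: "0 < epsd d" using d by (simp add: epsd_def)
  have nj: "nxt d j \<noteq> j" using d True by (auto simp: nxt_def)
  show ?thesis
  proof (cases "k = j")
    case kj: True
    then show ?thesis using nj by (simp add: cbig_def gco_def dl_self True)
  next
    case kj: False
    show ?thesis
    proof (cases "k = nxt d j")
      case True
      then show ?thesis using kj \<open>j < d\<close> d by (simp add: cbig_def gco_def dl_nxt)
    next
      case False
      have g: "gco d j k = real (dl d j k)" using False by (simp add: gco_def)
      have "real (dl d j k) \<le> real d" using dl_lt[OF \<open>j<d\<close> k] by simp
      then have "epsd d * real (dl d j k) \<le> epsd d * real d" using e0 by (intro mult_left_mono) auto
      moreover have "epsd d * real d \<le> 1" using d by (simp add: epsd_def field_simps)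
      moreover have "epsd d * real (dl d j k) \<ge> 0" using e0 by simp
      ultimately show ?thesis using kj \<open>j<d\<close> g by (simp add: cbig_def)
    qed
  qed
qed

lemma cbig_nz: assumes "d \<ge> 2" "j < d + 1" shows "\<exists>k<d. cbig d j k \<noteq> 0"
proof (cases "j < d")
  case True
  have nj: "nxt d j \<noteq> j" using assms True by (auto simp: nxt_def)
  have "cbig d j j = 1" using True nj by (simp add: cbig_def gco_def dl_self)
  then show ?thesis using True by (intro exI[of _ j]) auto
next
  case False
  then show ?thesis using assms by (intro exI[of _ 0]) (auto simp: cbig_def)
qed

lemma row_expand:
  assumes "j < d"
  shows "(\<Sum>k<d. cbig d j k * y k) = 2 * y j - (\<Sum>k<d. y k) + epsd d * (\<Sum>k<d. gco d j k * y k)"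
proof -
  have "(\<Sum>k<d. cbig d j k * y k) = (\<Sum>k<d. (if k = j then 2 * y k else 0) - y k + epsd d * (gco d j k * y k))"
    using assms by (intro sum.cong) (auto simp: cbig_def algebra_simps)
  also have "\<dots> = (\<Sum>k<d. (if k = j then 2 * y k else 0)) - (\<Sum>k<d. y k) + epsd d * (\<Sum>k<d. gco d j k * y k)"
    by (simp add: sum.distrib sum_subtractf sum_distrib_left)
  also have "\<dots> = 2 * y j - (\<Sum>k<d. y k) + epsd d * (\<Sum>k<d. gco d j k * y k)" using assms by simp
  finally show ?thesis .
qed

lemma gsum_int:
  assumes "j < d"
  shows "(\<Sum>k<d. gco d j k * real_of_int (Y k)) = real_of_int (WI d Y j - Y (nxt d j))"
proof -
  have "(\<Sum>k<d. gco d j k * real_of_int (Y k)) =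
      (\<Sum>k<d. real (dl d j k) * real_of_int (Y k)) - (\<Sum>k<d. if k = nxt d j then real_of_int (Y k) else 0)"
  proof -
    have "(\<Sum>k<d. gco d j k * real_of_int (Y k)) =
      (\<Sum>k<d. real (dl d j k) * real_of_int (Y k) - (if k = nxt d j then real_of_int (Y k) else 0))"
      by (intro sum.cong) (auto simp: gco_def algebra_simps)
    then show ?thesis by (simp add: sum_subtractf)
  qed
  also have "\<dots> = (\<Sum>k<d. real (dl d j k) * real_of_int (Y k)) - real_of_int (Y (nxt d j))"
    using nxt_lt[OF assms] by simp
  also have "\<dots> = real_of_int (WI d Y j - Y (nxt d j))" by (simp add: WI_def)
  finally show ?thesis .
qed

lemma intprop_big:
  fixes Y :: "nat \<Rightarrow> int"
  assumes d4: "d \<ge> 4" and rows: "\<And>j. j < d + 1 \<Longrightarrow> (\<Sum>k<d. cbig d j k * real_of_int (Y k)) \<le> 1"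
  shows "unitchar d Y"
proof -
  define y where "y k = real_of_int (Y k)" for k
  define s where "s = (\<Sum>k<d. y k)"
  define D where "D = real d"
  define e where "e = epsd d"
  define G where "G j = (\<Sum>k<d. gco d j k * y k)" for j
  define Q where "Q = (\<Sum>k<d. \<bar>y k\<bar>)"
  define T where "T = e * D * Q"
  have D4: "D \<ge> 4" using d4 D_def by simp
  have eD: "e * D * D = 1/16" using d4 by (simp add: e_def D_def epsd_def)
  have e0: "e > 0" using d4 by (simp add: e_def epsd_def)
  have cap: "s \<le> 1" using rows[of d] by (simp add: cbig_def s_def y_def)
  have row: "2 * y j - s + e * G j \<le> 1" if "j < d" for j
    using rows[of j] that row_expand[OF that, of y] by (simp add: s_def e_def G_def y_def)
  have Gb: "\<bar>G j\<bar> \<le> D * Q" if "j < d" for j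
  proof -
    have "\<bar>G j\<bar> \<le> (\<Sum>k<d. \<bar>gco d j k * y k\<bar>)" unfolding G_def by (rule sum_abs)
    also have "\<dots> \<le> (\<Sum>k<d. D * \<bar>y k\<bar>)"
    proof (intro sum_mono)
      fix k assume "k \<in> {..<d}"
      then have "\<bar>gco d j k\<bar> \<le> D" using gco_bound[OF that] D_def by simp
      then show "\<bar>gco d j k * y k\<bar> \<le> D * \<bar>y k\<bar>" by (simp add: abs_mult mult_right_mono)
    qed
    also have "\<dots> = D * Q" by (simp add: Q_def sum_distrib_left)
    finally show ?thesis .
  qed
  have Q0: "Q \<ge> 0" unfolding Q_def by (intro sum_nonneg) auto
  have T0: "T \<ge> 0" using e0 D4 Q0 by (simp add: T_def)
  have Eb: "\<bar>e * G j\<bar> \<le> T" if "j<d" for j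
  proof -
    have "\<bar>e * G j\<bar> = e * \<bar>G j\<bar>" using e0 by (simp add: abs_mult)
    also have "\<dots> \<le> e * (D * Q)" using Gb[OF that] e0 by (intro mult_left_mono) auto
    finally show ?thesis by (simp add: T_def mult.assoc)
  qed
  have sumrow: "(D - 2) * s \<ge> - D - D * T"
  proof -
    have "(\<Sum>j<d. 2 * y j - s + e * G j) \<le> (\<Sum>j<d. (1::real))" by (intro sum_mono) (use row in auto)
    then have a: "2 * s - D * s + (\<Sum>j<d. e * G j) \<le> D"
      by (simp add: sum.distrib sum_subtractf s_def D_def sum_distrib_left)
    have "(\<Sum>j<d. - T) \<le> (\<Sum>j<d. e * G j)"
    proof (intro sum_mono)
      fix j assume "j \<in> {..<d}"
      then show "- T \<le> e * G j" using Eb[of j] by (simp add: abs_le_iff)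
    qed
    then have b: "- D * T \<le> (\<Sum>j<d. e * G j)" by (simp add: D_def)
    have c: "(D - 2) * s = D * s - 2 * s" by (simp add: algebra_simps)
    show ?thesis using a b c by linarith
  qed
  have ypos: "y j \<le> 1 + T / 2" if "j<d" for j
    using row[OF that] Eb[OF that] cap by (simp add: abs_le_iff)
  have Qeq: "Q = 2 * (\<Sum>k<d. max (y k) 0) - s"
  proof -
    have "Q = (\<Sum>k<d. 2 * max (y k) 0 - y k)" unfolding Q_def by (intro sum.cong) auto
    then show ?thesis by (simp add: sum_subtractf s_def sum_distrib_left)
  qed
  have Pp: "(\<Sum>k<d. max (y k) 0) \<le> D * (1 + T/2)"
  proof -
    have "(\<Sum>k<d. max (y k) 0) \<le> (\<Sum>k<d. 1 + T/2)"
      by (intro sum_mono) (use ypos T0 in auto)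
    then show ?thesis by (simp add: D_def)
  qed
  have QT: "Q = 16 * D * T"
  proof -
    have "16 * D * T = 16 * (e * D * D) * Q" by (simp add: T_def algebra_simps)
    then show ?thesis using eD by simp
  qed
  have main: "T * (15 * D - 31) \<le> 2 * D - 3"
  proof -
    have q1: "Q \<le> 2 * D + D * T - s" using Qeq Pp by (simp add: algebra_simps)
    have "(D - 2) * Q \<le> (D - 2) * (2 * D + D * T - s)" using q1 D4 by (intro mult_left_mono) auto
    also have "\<dots> = (D - 2) * (2 * D + D * T) - (D - 2) * s" by (simp add: algebra_simps)
    also have "\<dots> \<le> (D - 2) * (2 * D + D * T) + D + D * T" using sumrow by linarith
    finally have f: "(D - 2) * (16 * D * T) \<le> (D - 2) * (2 * D + D * T) + D + D * T" using QT by simp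
    have idt: "D * (T * (15 * D - 31) - (2 * D - 3)) = (D - 2) * (16 * D * T) - ((D - 2) * (2 * D + D * T) + D + D * T)"
      by (simp add: algebra_simps)
    have "D * (T * (15 * D - 31) - (2 * D - 3)) \<le> 0" using f idt by linarith
    then have "T * (15 * D - 31) - (2 * D - 3) \<le> 0" using D4 by (simp add: mult_le_0_iff)
    then show ?thesis by simp
  qed
  have Tq: "T < 1/4"
  proof (rule ccontr)
    assume "\<not> T < 1/4"
    then have "T \<ge> 1/4" by simp
    then have "T * (15 * D - 31) \<ge> (1/4) * (15 * D - 31)" using D4 by (intro mult_right_mono) auto
    then have "(1/4) * (15 * D - 31) \<le> 2 * D - 3" using main by linarith
    then show False using D4 by (simp add: algebra_simps)
  qed
  have sgt: "s > -3"
  proof (rule ccontr)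
    assume "\<not> s > -3"
    then have "s \<le> -3" by simp
    then have "(D - 2) * s \<le> (D - 2) * (-3)" using D4 by (intro mult_left_mono) auto
    moreover have "D * T \<le> D * (1/4)" using Tq D4 by (intro mult_left_mono) auto
    moreover have "(D - 2) * (-3) = 6 - 3 * D" by (simp add: algebra_simps)
    moreover have "D * (1/4) = D / 4" by simp
    ultimately have "- D - D / 4 \<le> 6 - 3 * D" using sumrow by linarith
    then show False using D4 by linarith
  qed
  define S where "S = (\<Sum>k<d. Y k)"
  have sS: "s = real_of_int S" by (simp add: s_def S_def y_def)
  have S1: "S \<le> 1" using cap sS by simp
  have S2: "S \<ge> -2" using sgt sS by simp
  have up: "2 * Y j \<le> S + 1" if "j < d" for j
  proof -
    have "2 * y j < 2 + s" using row[OF that] Eb[OF that] Tq by (simp add: abs_le_iff)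
    then have "real_of_int (2 * Y j) < real_of_int (S + 2)" using sS by (simp add: y_def)
    then show ?thesis by linarith
  qed
  have tie: "WI d Y j \<le> Y (nxt d j)" if "j < d" "2 * Y j = S + 1" for j
  proof -
    have "2 * y j = 1 + s" using that(2) sS y_def
      by (metis of_int_add of_int_mult of_int_numeral of_int_1 add.commute)
    then have "e * G j \<le> 0" using row[OF that(1)] by simp
    then have "G j \<le> 0" using e0 by (simp add: mult_le_0_iff)
    moreover have "G j = real_of_int (WI d Y j - Y (nxt d j))" using gsum_int[OF that(1), of Y]
      by (simp add: G_def y_def)
    ultimately show ?thesis by simp
  qed
  show ?thesis using comb[of d Y] d4 S1 S2 up tie by (simp add: S_def)
qed

definition c1 :: "nat \<Rightarrow> nat \<Rightarrow> real" where "c1 j k = (if j = 0 then 1 else -1)"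

lemma intprop_1:
  fixes Y :: "nat \<Rightarrow> int"
  assumes rows: "\<And>j. j < 2 \<Longrightarrow> (\<Sum>k<1. c1 j k * real_of_int (Y k)) \<le> 1"
  shows "unitchar 1 Y"
proof -
  have a: "real_of_int (Y 0) \<le> 1" using rows[of 0] by (simp add: c1_def)
  have b: "- real_of_int (Y 0) \<le> 1" using rows[of 1] by (simp add: c1_def)
  have "Y 0 = 0 \<or> Y 0 = 1 \<or> Y 0 = -1" using a b by linarith
  then show ?thesis unfolding unitchar_def by (auto intro!: exI[of _ "Y 0"])
qed

definition c3 :: "nat \<Rightarrow> nat \<Rightarrow> real" where
  "c3 j k = (if j = 0 then (if k = 0 then -1 else if k = 1 then -1 else 1/2)
     else if j = 1 then (if k = 0 then -1 else if k = 1 then 1 else -1/2)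
     else if j = 2 then (if k = 0 then 1 else if k = 1 then -1/2 else -1)
     else (if k = 0 then 1 else if k = 1 then 1/2 else 1))"

lemma sum3: "(\<Sum>k<(3::nat). f k) = f 0 + f 1 + (f 2 :: real)"
  by (simp add: numeral_3_eq_3 numeral_2_eq_2 lessThan_Suc)

lemma c3_vals:
  "c3 0 0 = -1" "c3 0 1 = -1" "c3 0 2 = 1/2"
  "c3 1 0 = -1" "c3 1 1 = 1" "c3 1 2 = -1/2"
  "c3 2 0 = 1" "c3 2 1 = -1/2" "c3 2 2 = -1"
  "c3 3 0 = 1" "c3 3 1 = 1/2" "c3 3 2 = 1"
  by (simp_all add: c3_def)

lemma lt4: "j < (4::nat) \<longleftrightarrow> j = 0 \<or> j = 1 \<or> j = 2 \<or> j = 3" by auto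
lemma lt3: "j < (3::nat) \<longleftrightarrow> j = 0 \<or> j = 1 \<or> j = 2" by auto

lemma c3_bound: "j < 4 \<Longrightarrow> k < 3 \<Longrightarrow> \<bar>c3 j k\<bar> \<le> 1"
  unfolding lt4 lt3 by (auto simp: c3_def)

lemma c3_nz: "j < 4 \<Longrightarrow> \<exists>k<3. c3 j k \<noteq> 0"
  unfolding lt4 by (auto simp: c3_def intro: exI[of _ 0])

lemma intprop_3:
  fixes Y :: "nat \<Rightarrow> int"
  assumes rows: "\<And>j. j < 4 \<Longrightarrow> (\<Sum>k<3. c3 j k * real_of_int (Y k)) \<le> 1"
  shows "unitchar 3 Y"
proof -
  define x where "x = Y 0"
  define y where "y = Y 1"
  define z where "z = Y 2"
  have r: "- 2 * x - 2 * y + z \<le> 2" "- 2 * x + 2 * y - z \<le> 2" "2 * x - y - 2 * z \<le> 2" "2 * x + y + 2 * z \<le> 2"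
  proof -
    have "real_of_int (- 2 * x - 2 * y + z) \<le> 2" using rows[of 0] by (simp add: sum3 c3_def x_def y_def z_def)
    then show "- 2 * x - 2 * y + z \<le> 2" by linarith
    have "real_of_int (- 2 * x + 2 * y - z) \<le> 2" using rows[of 1] by (simp add: sum3 c3_def x_def y_def z_def)
    then show "- 2 * x + 2 * y - z \<le> 2" by linarith
    have "real_of_int (2 * x - y - 2 * z) \<le> 2" using rows[of 2] by (simp add: sum3 c3_def x_def y_def z_def)
    then show "2 * x - y - 2 * z \<le> 2" by linarith
    have "real_of_int (2 * x + y + 2 * z) \<le> 2" using rows[of 3] by (simp add: sum3 c3_def x_def y_def z_def)
    then show "2 * x + y + 2 * z \<le> 2" by linarith
  qed
  have xr: "x = -1 \<or> x = 0 \<or> x = 1" using r by linarith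
  have cases: "(x=0 \<and> y=0 \<and> z=0) \<or> (x=1 \<and> y=0 \<and> z=0) \<or> (x=-1 \<and> y=0 \<and> z=0) \<or>
    (x=0 \<and> y=1 \<and> z=0) \<or> (x=0 \<and> y=-1 \<and> z=0) \<or> (x=0 \<and> y=0 \<and> z=1) \<or> (x=0 \<and> y=0 \<and> z=-1)"
  proof -
    { assume x1: "x = 1"
      then have "y = -2 * z" using r by linarith
      then have "5 * z \<le> 4" "- 5 * z \<le> 4" using r x1 by linarith+
      then have "z = 0" by linarith
      then have "y = 0 \<and> z = 0" using \<open>y = -2 * z\<close> by simp }
    moreover
    { assume x1: "x = -1"
      then have "z = 2 * y" using r by linarith
      then have "5 * y \<le> 4" "- 5 * y \<le> 4" using r x1 by linarith+
      then have "y = 0" by linarith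
      then have "y = 0 \<and> z = 0" using \<open>z = 2 * y\<close> by simp }
    moreover
    { assume x0: "x = 0"
      have "y \<ge> -1 \<and> y \<le> 1" using r x0 by linarith
      then have yr: "y = -1 \<or> y = 0 \<or> y = 1" by linarith
      { assume "y = 1" then have "z = 0" using r x0 by linarith }
      moreover
      { assume "y = -1" then have "z = 0" using r x0 by linarith }
      moreover
      { assume "y = 0" then have "z = -1 \<or> z = 0 \<or> z = 1" using r x0 by linarith }
      ultimately have "(y=0 \<and> z=0) \<or> (y=1 \<and> z=0) \<or> (y=-1 \<and> z=0) \<or> (y=0 \<and> z=1) \<or> (y=0 \<and> z=-1)"
        using yr by blast }
    ultimately show ?thesis using xr by blast
  qed
  have all3: "\<And>P. (\<forall>k<(3::nat). P k) \<longleftrightarrow> P 0 \<and> P 1 \<and> P 2" unfolding lt3 by auto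
  have U: "unitchar 3 Y" if "i < 3" "t = 1 \<or> t = -1" "Y i = t" "\<forall>k<3. k \<noteq> i \<longrightarrow> Y k = 0" for i t
  proof -
    have "\<forall>k<3. Y k = (if k = i then t else 0)" using that by auto
    then show ?thesis unfolding unitchar_def using that(1,2) by blast
  qed
  have Z: "unitchar 3 Y" if "\<forall>k<3. Y k = 0" using that unfolding unitchar_def by blast
  from cases show ?thesis
  proof (elim disjE)
    assume "x = 0 \<and> y = 0 \<and> z = 0" then show ?thesis by (intro Z) (simp add: all3 x_def y_def z_def)
  next
    assume "x = 1 \<and> y = 0 \<and> z = 0" then show ?thesis by (intro U[of 0 1]) (simp_all add: all3 x_def y_def z_def)
  next
    assume "x = -1 \<and> y = 0 \<and> z = 0" then show ?thesis by (intro U[of 0 "-1"]) (simp_all add: all3 x_def y_def z_def)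
  next
    assume "x = 0 \<and> y = 1 \<and> z = 0" then show ?thesis by (intro U[of 1 1]) (simp_all add: all3 x_def y_def z_def)
  next
    assume "x = 0 \<and> y = -1 \<and> z = 0" then show ?thesis by (intro U[of 1 "-1"]) (simp_all add: all3 x_def y_def z_def)
  next
    assume "x = 0 \<and> y = 0 \<and> z = 1" then show ?thesis by (intro U[of 2 1]) (simp_all add: all3 x_def y_def z_def)
  next
    assume "x = 0 \<and> y = 0 \<and> z = -1" then show ?thesis by (intro U[of 2 "-1"]) (simp_all add: all3 x_def y_def z_def)
  qed
qed

lemma diamond_subset_int: "(diamond :: (real^'n) set) \<subseteq> int_points"
  by (auto simp: diamond_def int_points_def axis_def)

lemma upper_generic:
  fixes c :: "nat \<Rightarrow> nat \<Rightarrow> real" and m :: nat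
  assumes m: "m \<le> CARD('n) + 1"
    and cb: "\<And>j k. j < m \<Longrightarrow> k < CARD('n) \<Longrightarrow> \<bar>c j k\<bar> \<le> 1"
    and cnz: "\<And>j. j < m \<Longrightarrow> \<exists>k < CARD('n). c j k \<noteq> 0"
    and ip: "\<And>Y::nat \<Rightarrow> int. (\<And>j. j < m \<Longrightarrow> (\<Sum>k<CARD('n). c j k * real_of_int (Y k)) \<le> 1)
               \<Longrightarrow> unitchar CARD('n) Y"
  shows "\<exists>P::(real^'n) set. polyhedron P \<and> P \<inter> int_points = diamond \<and> card {C. C facet_of P} \<le> CARD('n) + 1"
proof -
  let ?d = "CARD('n)"
  obtain \<sigma> :: "nat \<Rightarrow> 'n" where bij: "bij_betw \<sigma> {..<?d} UNIV"
    using ex_bij_betw_nat_finite[of "UNIV::'n set"] by (auto simp: atLeast0LessThan)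
  define idx where "idx = inv_into {..<?d} \<sigma>"
  have surj: "\<sigma> ` {..<?d} = UNIV" using bij bij_betw_imp_surj_on by blast
  have idx1: "idx i < ?d" for i using inv_into_into[of i \<sigma> "{..<?d}"] surj idx_def by auto
  have idx2: "\<sigma> (idx i) = i" for i using f_inv_into_f[of i \<sigma> "{..<?d}"] surj idx_def by auto
  have idx3: "idx (\<sigma> k) = k" if "k < ?d" for k
    using inv_into_f_f[OF bij_betw_imp_inj_on[OF bij], of k] that idx_def by auto
  define a where "a j = (\<chi> i. c j (idx i))" for j
  have inner: "a j \<bullet> x = (\<Sum>k<?d. c j k * x $ \<sigma> k)" for j x
  proof -
    have "a j \<bullet> x = (\<Sum>i\<in>UNIV. c j (idx i) * x $ i)" by (simp add: a_def inner_vec_def)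
    also have "\<dots> = (\<Sum>k<?d. c j (idx (\<sigma> k)) * x $ \<sigma> k)"
      using sum.reindex_bij_betw[OF bij, of "\<lambda>i. c j (idx i) * x $ i"] by simp
    also have "\<dots> = (\<Sum>k<?d. c j k * x $ \<sigma> k)" using idx3 by (intro sum.cong) auto
    finally show ?thesis .
  qed
  define P where "P = {x::real^'n. \<forall>j<m. a j \<bullet> x \<le> 1}"
  define F0 where "F0 = (\<lambda>j. {x::real^'n. a j \<bullet> x \<le> 1}) ` {..<m}"
  have PF: "P = \<Inter>F0" by (auto simp: P_def F0_def)
  have anz: "a j \<noteq> 0" if jm: "j < m" for j
  proof
    assume az: "a j = 0"
    obtain k where k: "k < ?d" "c j k \<noteq> 0" using cnz[OF jm] by blast
    then have "a j $ \<sigma> k \<noteq> 0" using idx3 by (simp add: a_def)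
    then show False using az by simp
  qed
  have hs: "\<exists>a' b. a' \<noteq> 0 \<and> h = {x. a' \<bullet> x \<le> b}" if "h \<in> F0" for h
    using that anz by (auto simp: F0_def)
  have aax: "\<bar>a j $ i\<bar> \<le> 1" if "j < m" for j i using cb[OF that idx1] by (simp add: a_def)
  have dP: "diamond \<subseteq> P"
  proof
    fix x :: "real^'n" assume "x \<in> diamond"
    then consider "x = 0" | i where "x = axis i 1" | i where "x = axis i (-1)" by (auto simp: diamond_cases)
    then show "x \<in> P"
    proof cases
      case 1 then show ?thesis by (simp add: P_def)
    next
      case 2 then show ?thesis using aax by (auto simp: P_def inner_axis abs_le_iff)
    next
      case 3 then show ?thesis using aax by (auto simp: P_def inner_axis abs_le_iff)
    qed
  qed
  have PZ: "P \<inter> int_points = diamond"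
  proof
    show "diamond \<subseteq> P \<inter> int_points" using dP diamond_subset_int by blast
    show "P \<inter> int_points \<subseteq> diamond"
    proof
      fix x assume x: "x \<in> P \<inter> int_points"
      define Y where "Y k = \<lfloor>x $ \<sigma> k\<rfloor>" for k
      have xY: "x $ \<sigma> k = real_of_int (Y k)" for k
      proof -
        have "x $ \<sigma> k \<in> \<int>" using x by (simp add: int_points_def)
        then obtain n where "x $ \<sigma> k = real_of_int n" by (auto elim: Ints_cases)
        then show ?thesis by (simp add: Y_def)
      qed
      have "(\<Sum>k<?d. c j k * real_of_int (Y k)) \<le> 1" if jm: "j < m" for j
      proof -
        have "a j \<bullet> x \<le> 1" using x jm by (simp add: P_def)
        moreover have "a j \<bullet> x = (\<Sum>k<?d. c j k * real_of_int (Y k))" using inner[of j x] xY by simp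
        ultimately show ?thesis by simp
      qed
      then have uc: "unitchar ?d Y" using ip by blast
      have xi: "x $ i = real_of_int (Y (idx i))" for i using xY[of "idx i"] idx2 by simp
      from uc consider (z) "\<forall>k<?d. Y k = 0"
        | (u) i t where "i < ?d" "t = 1 \<or> t = -1" "\<forall>k<?d. Y k = (if k = i then t else 0)"
        unfolding unitchar_def by blast
      then show "x \<in> diamond"
      proof cases
        case z
        then have "x = 0" using xi idx1 by (simp add: vec_eq_iff)
        then show ?thesis by (simp add: diamond_def)
      next
        case (u i t)
        note i = u(1) and t = u(2) and Yt = u(3)
        have "x = axis (\<sigma> i) (real_of_int t)"
        proof (rule vec_eq_iff[THEN iffD2], rule allI)
          fix l
          have e: "idx l = i \<longleftrightarrow> l = \<sigma> i" using idx2[of l] idx3[OF i] by auto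
          show "x $ l = axis (\<sigma> i) (real_of_int t) $ l"
            using xi[of l] Yt idx1[of l] e by (auto simp: axis_def)
        qed
        then show ?thesis using t by (auto simp: diamond_def)
      qed
    qed
  qed
  have aff: "affine hull P = UNIV" using hull_mono[OF dP, of affine] affine_hull_diamond by auto
  have finF0: "finite F0" by (simp add: F0_def)
  have "card {C. C facet_of P} \<le> card F0" using facets_le_halfspaces[OF finF0 hs PF aff] by simp
  also have "card F0 \<le> m" using card_image_le[of "{..<m}" "\<lambda>j. {x::real^'n. a j \<bullet> x \<le> 1}"] by (simp add: F0_def)
  finally have "card {C. C facet_of P} \<le> ?d + 1" using m by simp
  moreover have "polyhedron P" unfolding polyhedron_def using finF0 PF hs by blast
  ultimately show ?thesis using PZ by blast
qed

lemma upper: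
  assumes "CARD('n::finite) \<noteq> 2"
  shows "\<exists>P::(real^'n) set. polyhedron P \<and> P \<inter> int_points = diamond \<and> card {C. C facet_of P} \<le> CARD('n) + 1"
proof -
  have "CARD('n) \<ge> 1" by (simp add: Suc_leI)
  then consider "CARD('n) = 1" | "CARD('n) = 3" | "CARD('n) \<ge> 4" using assms by linarith
  then show ?thesis
  proof cases
    case 1
    show ?thesis
    proof (rule upper_generic[where m=2 and c=c1])
      show "2 \<le> CARD('n) + 1" using 1 by simp
      show "\<bar>c1 j k\<bar> \<le> 1" for j k by (simp add: c1_def)
      show "\<exists>k<CARD('n). c1 j k \<noteq> 0" for j using 1 by (intro exI[of _ 0]) (simp add: c1_def)
      show "unitchar CARD('n) Y" if "\<And>j. j < 2 \<Longrightarrow> (\<Sum>k<CARD('n). c1 j k * real_of_int (Y k)) \<le> 1" for Y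
        using intprop_1[of Y] that 1 by simp
    qed
  next
    case 2
    show ?thesis
    proof (rule upper_generic[where m=4 and c=c3])
      show "4 \<le> CARD('n) + 1" using 2 by simp
      show "\<bar>c3 j k\<bar> \<le> 1" if "j < 4" "k < CARD('n)" for j k using c3_bound that 2 by simp
      show "\<exists>k<CARD('n). c3 j k \<noteq> 0" if "j < 4" for j using c3_nz that 2 by simp
      show "unitchar CARD('n) Y" if "\<And>j. j < 4 \<Longrightarrow> (\<Sum>k<CARD('n). c3 j k * real_of_int (Y k)) \<le> 1" for Y
        using intprop_3[of Y] that 2 by simp
    qed
  next
    case 3
    show ?thesis
    proof (rule upper_generic[where m="CARD('n) + 1" and c="cbig CARD('n)"])
      show "CARD('n) + 1 \<le> CARD('n) + 1" by simp
      show "\<bar>cbig CARD('n) j k\<bar> \<le> 1" if "j < CARD('n) + 1" "k < CARD('n)" for j k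
        using cbig_bound[of "CARD('n)" j k] that 3 by simp
      show "\<exists>k<CARD('n). cbig CARD('n) j k \<noteq> 0" if "j < CARD('n) + 1" for j
        using cbig_nz[of "CARD('n)" j] that 3 by simp
      show "unitchar CARD('n) Y"
        if "\<And>j. j < CARD('n) + 1 \<Longrightarrow> (\<Sum>k<CARD('n). cbig CARD('n) j k * real_of_int (Y k)) \<le> 1" for Y
        using intprop_big[of "CARD('n)" Y] that 3 by simp
    qed
  qed
qed

theorem theorem5p5:
  assumes "CARD('n::finite) \<noteq> 2"
  shows "rc (diamond :: (real ^ 'n) set) = CARD('n) + 1"
proof -
  obtain P0 :: "(real^'n) set" where P0: "polyhedron P0" "P0 \<inter> int_points = diamond"
    "card {C. C facet_of P0} \<le> CARD('n) + 1"
    using upper[OF assms] by blast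
  define Q where "Q m \<longleftrightarrow> (\<exists>P. polyhedron P \<and> P \<inter> int_points = (diamond :: (real^'n) set) \<and> card {F. F facet_of P} = m)" for m
  have rcQ: "rc (diamond :: (real ^ 'n) set) = (LEAST m. Q m)" by (simp add: rc_def Q_def)
  have ex: "Q (card {C. C facet_of P0})" using P0 by (auto simp: Q_def)
  have le: "(LEAST m. Q m) \<le> card {C. C facet_of P0}" by (rule Least_le[of Q, OF ex])
  have "Q (LEAST m. Q m)" by (rule LeastI[of Q, OF ex])
  then obtain P :: "(real^'n) set" where P: "polyhedron P" "P \<inter> int_points = diamond"
    "card {F. F facet_of P} = (LEAST m. Q m)" by (auto simp: Q_def)
  have "CARD('n) + 1 \<le> (LEAST m. Q m)" using lower_bound[OF P(1,2)] P(3) by simp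
  then show ?thesis using le P0(3) rcQ by simp
qed

end
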